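(* For every integer $n\geq 1$, \[ \sum_{\sigma\in\mathcal{Q}_n} q^{\operatorname{lrmin}(\sigma)} x^{\operatorname{ap}(\sigma)} y^{\operatorname{even}(\sigma)}= \sum_{\pi\in \overline{\mathfrak{S}}_n}q^{\operatorname{lrmin}(\pi)} x^{\operatorname{asc}(\pi)} y^{\operatorname{mark}(\pi)}. \]
   Context: Let $[n]_2$ be the multiset $\{1,1,2,2,\dots,n,n\}$. A Stirling permutation of order $n$ is a permutation $\sigma=\sigma_1\cdots\sigma_{2n}$ of $[n]_2$ such that for each $i\in[n]$ every entry between the two occurrences of $i$ is greater than $i$; $\mathcal{Q}_n$ denotes the set of these. An ascent plateau of $\sigma\in\mathcal{Q}_n$ is an entry $\sigma_i$ with $2\le i\le 2n-1$ and $\sigma_{i-1}<\sigma_i=\sigma_{i+1}$; $\operatorname{ap}(\sigma)$ is the number of ascent plateaux. An entry $k$ of $\sigma$ is even indexed if the first occurrence of $k$ is at an even position of $\sigma$; $\operatorname{even}(\sigma)$ is the number of even indexed entries (each value $k\in[n]$ counted once). For a word $w=w_1\cdots w_m$, a left-to-right minimum is an entry $w_i$ with $i=1$ or $w_i<w_j$ for all $j<i$; $\operatorname{lrmin}(w)$ is the number of distinct values that are left-to-right minima (for Stirling permutations this is the number of values $k$ some occurrence of which is a left-to-right minimum). A marked permutation of $[n]$ is a permutation $\pi=\pi_1\cdots\pi_n$ of $[n]$ together with a choice of marks on some (possibly none) of its entries that are not left-to-right minima; left-to-right minima are never marked. $\overline{\mathfrak{S}}_n$ is the set of marked permutations of $[n]$.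 For $\pi\in\overline{\mathfrak{S}}_n$, $\operatorname{mark}(\pi)$ is the number of marked entries, and $\operatorname{lrmin}(\pi)$ and $\operatorname{asc}(\pi)$ are computed ignoring marks, where $\operatorname{asc}(\pi)$ is the number of indices $i\in\{2,\dots,n\}$ with $\pi_i>\pi_{i-1}$. *)

theory Defs
  imports "HOL-Library.Multiset"
begin

text \<open>Words are lists of naturals; positions are 0-indexed internally
(paper position i corresponds to list index i-1).\<close>

definition multiset2 :: "nat \<Rightarrow> nat multiset" where
  "multiset2 n = (\<Sum>i\<in>{1..n}. {#i, i#})"

definition stirling_perms :: "nat \<Rightarrow> nat list set" where
  "stirling_perms n = {\<sigma>. mset \<sigma> = multiset2 n \<and>
     (\<forall>i j k. i < j \<and> j < k \<and> k < length \<sigma> \<and> \<sigma> ! i = \<sigma> ! k \<longrightarrow> \<sigma> ! j > \<sigma> ! i)}"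

text \<open>Ascent plateaux: paper positions 2 \<le> i \<le> 2n-1 with \<sigma>_{i-1} < \<sigma>_i = \<sigma>_{i+1}.\<close>
definition ap :: "nat list \<Rightarrow> nat" where
  "ap \<sigma> = card {i. 1 \<le> i \<and> i + 1 < length \<sigma> \<and> \<sigma> ! (i - 1) < \<sigma> ! i \<and> \<sigma> ! i = \<sigma> ! (i + 1)}"

text \<open>Even indexed entries: the first occurrence of k is at an even (1-indexed) position,
i.e. at an odd 0-indexed list index.\<close>
definition even_idx :: "nat list \<Rightarrow> nat" where
  "even_idx \<sigma> = card {k \<in> set \<sigma>. even (Suc (LEAST i. i < length \<sigma> \<and> \<sigma> ! i = k))}"

definition lrmin_vals :: "nat list \<Rightarrow> nat set" where
  "lrmin_vals w = {w ! i | i. i < length w \<and> (\<forall>j<i. w ! i < w ! j)}"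

definition lrmin :: "nat list \<Rightarrow> nat" where
  "lrmin w = card (lrmin_vals w)"

definition asc :: "nat list \<Rightarrow> nat" where
  "asc \<pi> = card {i. 1 \<le> i \<and> i < length \<pi> \<and> \<pi> ! (i - 1) < \<pi> ! i}"

definition marked_perms :: "nat \<Rightarrow> (nat list \<times> nat set) set" where
  "marked_perms n = {(\<pi>, M). distinct \<pi> \<and> set \<pi> = {1..n} \<and> M \<subseteq> set \<pi> - lrmin_vals \<pi>}"

definition mark :: "nat list \<times> nat set \<Rightarrow> nat" where
  "mark p = card (snd p)"

end

theory Submission
  imports Defs
begin


definition ins :: "nat \<Rightarrow> nat \<Rightarrow> nat list \<Rightarrow> nat list" where
  "ins p m xs = take p xs @ m # m # drop p xs"

definition ins1 :: "nat \<Rightarrow> nat \<Rightarrow> nat list \<Rightarrow> nat list" where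
  "ins1 p m xs = take p xs @ m # drop p xs"

lemma length_ins[simp]: "p \<le> length xs \<Longrightarrow> length (ins p m xs) = length xs + 2"
  by (simp add: ins_def)

lemma length_ins1[simp]: "p \<le> length xs \<Longrightarrow> length (ins1 p m xs) = Suc (length xs)"
  by (simp add: ins1_def)

lemma nth_ins: "p \<le> length xs \<Longrightarrow> j < length xs + 2 \<Longrightarrow>
  ins p m xs ! j = (if j < p then xs ! j else if j < p + 2 then m else xs ! (j - 2))"
  by (auto simp: ins_def nth_append min_def nth_Cons' numeral_2_eq_2)

lemma nth_ins1: "p \<le> length xs \<Longrightarrow>
  ins1 p m xs ! j = (if j < p then xs ! j else if j = p then m else xs ! (j - 1))"
  by (auto simp: ins1_def nth_append min_def nth_Cons')

lemma set_ins[simp]: "p \<le> length xs \<Longrightarrow> set (ins p m xs) = insert m (set xs)"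
proof -
  have "set xs = set (take p xs) \<union> set (drop p xs)"
    by (metis append_take_drop_id set_append)
  then show ?thesis by (auto simp: ins_def)
qed

lemma set_ins1[simp]: "set (ins1 p m xs) = insert m (set xs)"
proof -
  have "set xs = set (take p xs) \<union> set (drop p xs)"
    by (metis append_take_drop_id set_append)
  then show ?thesis by (auto simp: ins1_def)
qed

lemma mset_ins: "mset (ins p m xs) = mset xs + {#m, m#}"
proof -
  have "mset xs = mset (take p xs) + mset (drop p xs)"
    by (metis append_take_drop_id mset_append)
  then show ?thesis by (simp add: ins_def)
qed

lemma mset_ins1: "mset (ins1 p m xs) = add_mset m (mset xs)"
proof -
  have "mset xs = mset (take p xs) + mset (drop p xs)"
    by (metis append_take_drop_id mset_append)
  then show ?thesis by (simp add: ins1_def)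
qed

lemma distinct_ins1: "distinct xs \<Longrightarrow> m \<notin> set xs \<Longrightarrow> distinct (ins1 p m xs)"
proof -
  assume a: "distinct xs" "m \<notin> set xs"
  have "set xs = set (take p xs) \<union> set (drop p xs)"
    by (metis append_take_drop_id set_append)
  moreover have "set (take p xs) \<inter> set (drop p xs) = {}"
    using a(1) by (metis append_take_drop_id distinct_append)
  ultimately show ?thesis using a
    by (auto simp: ins1_def)
qed

lemma lv_Nil[simp]: "lrmin_vals [] = {}"
  by (simp add: lrmin_vals_def)

lemma lv_Cons: "lrmin_vals (x # w) = insert x {y \<in> lrmin_vals w. y < x}"
proof -
  have "lrmin_vals (x # w) = {(x#w) ! i | i. i < length (x#w) \<and> (\<forall>j<i. (x#w) ! i < (x#w) ! j)}"
    by (simp add: lrmin_vals_def)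
  also have "\<dots> = insert x {w ! i | i. i < length w \<and> w ! i < x \<and> (\<forall>j<i. w ! i < w ! j)}"
    (is "?L = ?R")
  proof
    show "?L \<subseteq> ?R"
    proof
      fix z assume "z \<in> ?L"
      then obtain i where i: "z = (x#w)!i" "i < length (x#w)" "\<forall>j<i. (x#w) ! i < (x#w) ! j" by blast
      show "z \<in> ?R"
      proof (cases i)
        case 0 then show ?thesis using i by simp
      next
        case (Suc i0)
        have "w ! i0 < x" using i(3)[rule_format, of 0] Suc by simp
        moreover have "\<forall>j<i0. w ! i0 < w ! j" using i(3) Suc by auto
        ultimately show ?thesis using i Suc by auto
      qed
    qed
  next
    show "?R \<subseteq> ?L"
    proof
      fix z assume "z \<in> ?R"
      then consider "z = x" | i where "z = w ! i" "i < length w" "w ! i < x" "\<forall>j<i. w ! i < w ! j"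
        by blast
      then show "z \<in> ?L"
      proof cases
        case 1 then show ?thesis by (intro CollectI exI[of _ 0]) auto
      next
        case 2
        show ?thesis
        proof (intro CollectI exI[of _ "Suc i"] conjI)
          show "\<forall>j<Suc i. (x # w) ! Suc i < (x # w) ! j"
            using 2 by (auto simp: less_Suc_eq_0_disj)
        qed (use 2 in auto)
      qed
    qed
  qed
  also have "\<dots> = insert x {y \<in> lrmin_vals w. y < x}"
    by (auto simp: lrmin_vals_def)
  finally show ?thesis .
qed

lemma lv_subset: "lrmin_vals w \<subseteq> set w"
  by (auto simp: lrmin_vals_def)

lemma lv_append: "lrmin_vals (xs @ ys) = lrmin_vals xs \<union> {y \<in> lrmin_vals ys. \<forall>z\<in>set xs. y < z}"
  by (induction xs) (auto simp: lv_Cons)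

lemma lv_ins_gen:
  assumes "\<forall>z\<in>set xs. z < m" "lrmin_vals C = {m}" "set C = {m}" "p \<le> length xs"
  shows "lrmin_vals (take p xs @ C @ drop p xs) = (if p = 0 then insert m (lrmin_vals xs) else lrmin_vals xs)"
proof -
  have B: "\<forall>z\<in>set (drop p xs). z < m" using assms(1) by (meson in_set_dropD)
  have CB: "lrmin_vals (C @ drop p xs) = insert m (lrmin_vals (drop p xs))"
    using B assms(2,3) lv_subset[of "drop p xs"] by (auto simp: lv_append)
  show ?thesis
  proof (cases "p = 0")
    case True then show ?thesis using CB by simp
  next
    case False
    show ?thesis
    proof (cases "xs = []")
      case True then show ?thesis using assms by (simp add: lv_append)
    next
      case ne: False
      have "take p xs \<noteq> []" using False ne by simp
      then obtain z where z: "z \<in> set (take p xs)" by (meson list.set_sel(1))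
      then have "z < m" using assms(1) by (meson in_set_takeD)
      have "lrmin_vals (take p xs @ C @ drop p xs) = lrmin_vals (take p xs) \<union>
         {y \<in> insert m (lrmin_vals (drop p xs)). \<forall>z\<in>set (take p xs). y < z}"
        using CB by (simp add: lv_append)
      also have "\<dots> = lrmin_vals (take p xs) \<union>
         {y \<in> lrmin_vals (drop p xs). \<forall>z\<in>set (take p xs). y < z}"
        using z \<open>z < m\<close> by auto
      also have "\<dots> = lrmin_vals xs"
        by (metis append_take_drop_id lv_append)
      finally show ?thesis using False by simp
    qed
  qed
qed

lemma lrmin_ins:
  assumes "\<forall>z\<in>set xs. z < m" "p \<le> length xs"
  shows "lrmin (ins p m xs) = lrmin xs + (if p = 0 then 1 else 0)"
proof -
  have "lrmin_vals [m, m] = {m}" by (auto simp: lv_Cons)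
  then have "lrmin_vals (ins p m xs) = (if p = 0 then insert m (lrmin_vals xs) else lrmin_vals xs)"
    using lv_ins_gen[OF assms(1) _ _ assms(2), of "[m,m]"] by (simp add: ins_def)
  moreover have "m \<notin> lrmin_vals xs" using assms lv_subset by blast
  moreover have "finite (lrmin_vals xs)" using lv_subset finite_subset by blast
  ultimately show ?thesis by (simp add: lrmin_def)
qed

lemma lv_ins1:
  assumes "\<forall>z\<in>set xs. z < m" "p \<le> length xs"
  shows "lrmin_vals (ins1 p m xs) = (if p = 0 then insert m (lrmin_vals xs) else lrmin_vals xs)"
proof -
  have "lrmin_vals [m] = {m}" by (simp add: lv_Cons)
  then show ?thesis
    using lv_ins_gen[OF assms(1) _ _ assms(2), of "[m]"] by (simp add: ins1_def)
qed

lemma lrmin_ins1: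
  assumes "\<forall>z\<in>set xs. z < m" "p \<le> length xs"
  shows "lrmin (ins1 p m xs) = lrmin xs + (if p = 0 then 1 else 0)"
proof -
  have "m \<notin> lrmin_vals xs" using assms lv_subset by blast
  moreover have "finite (lrmin_vals xs)" using lv_subset finite_subset by blast
  ultimately show ?thesis using lv_ins1[OF assms] by (simp add: lrmin_def)
qed


definition plat :: "nat list \<Rightarrow> nat \<Rightarrow> bool" where
  "plat s i = (1 \<le> i \<and> i + 1 < length s \<and> s ! (i - 1) < s ! i \<and> s ! i = s ! (i + 1))"

lemma ap_plat: "ap s = card {i. plat s i}"
  by (simp add: ap_def plat_def)

lemma plat_fin: "finite {i. plat s i}"
  by (rule finite_subset[of _ "{..<length s}"]) (auto simp: plat_def)

lemma plat_set_ins: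
  assumes "\<forall>z\<in>set xs. z < m" "p \<le> length xs"
  shows "{i. plat (ins p m xs) i} = {i. plat xs i \<and> i + 1 < p} \<union> (if 1 \<le> p then {p} else {})
     \<union> (\<lambda>i. i + 2) ` {i. plat xs i \<and> p < i}" (is "?L = ?R")
proof (rule set_eqI)
  fix j
  have lt: "\<And>i. i < length xs \<Longrightarrow> xs ! i < m" using assms(1) by auto
  show "j \<in> ?L \<longleftrightarrow> j \<in> ?R"
  proof (cases "j + 1 < p")
    case True
    then show ?thesis using assms(2) by (auto simp: plat_def nth_ins)
  next
    case f1: False
    show ?thesis
    proof (cases "j + 1 = p")
      case True
      then have "xs ! j < m" using assms(2) lt by auto
      then show ?thesis using True assms(2) by (auto simp: plat_def nth_ins)
    next
      case f2: False
      show ?thesis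
      proof (cases "j = p")
        case True
        then show ?thesis using assms(2) lt by (auto simp: plat_def nth_ins)
      next
        case f3: False
        show ?thesis
        proof (cases "j = p + 1 \<or> j = p + 2")
          case True
          then show ?thesis using assms(2) lt[of p] lt[of "Suc p"] by (auto simp: plat_def nth_ins)
        next
          case f4: False
          then have "p + 3 \<le> j" using f1 f2 f3 by auto
          then have "j \<in> ?R \<longleftrightarrow> plat xs (j - 2)"
            by (auto simp: image_iff intro: exI[of _ "j - 2"])
          moreover have "j \<in> ?L \<longleftrightarrow> plat xs (j - 2)"
          proof -
            obtain k where k: "j = p + 3 + k" using \<open>p + 3 \<le> j\<close> le_Suc_ex by blast
            have e1: "j - 1 = (p + k) + 2" "j - 2 = p + 1 + k" "j + 1 = (p + k + 2) + 2" "j = (p+1+k) + 2"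
              using k by auto
            show ?thesis
              unfolding plat_def e1 using assms(2)
              by (auto simp: nth_ins)
          qed
          ultimately show ?thesis by simp
        qed
      qed
    qed
  qed
qed


definition killed :: "nat list \<Rightarrow> nat \<Rightarrow> bool" where
  "killed s p = (plat s (p - 1) \<or> plat s p)"
lemma plat_not_both: "plat s i \<Longrightarrow> \<not> plat s (Suc i)"
  by (auto simp: plat_def)

lemma plat_pos: "plat s i \<Longrightarrow> 1 \<le> i" by (simp add: plat_def)
lemma cardM: "card {i. plat xs i \<and> p \<le> i + 1 \<and> i \<le> p} = (if p = 0 \<or> \<not> killed xs p then 0 else 1)"
  (is "card ?M = _")
  proof (cases "p = 0")
    case True
    then have "?M = {}" using plat_pos by fastforce
    then show ?thesis using True by simp
  next
    case False
    then obtain k where k: "p = Suc k" using not0_implies_Suc by blast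
    have ar: "\<And>i. (p \<le> i + 1 \<and> i \<le> p) \<longleftrightarrow> (i = k \<or> i = Suc k)" using k by arith
    have Me: "?M = {i \<in> {k, Suc k}. plat xs i}" using ar by blast
    have kd: "killed xs p = (plat xs k \<or> plat xs (Suc k))" using k by (simp add: killed_def)
    show ?thesis
    proof (cases "plat xs k")
      case True
      then have "\<not> plat xs (Suc k)" using plat_not_both by blast
      then have "?M = {k}" using True Me by blast
      then show ?thesis using True k kd by simp
    next
      case f2: False
      then have "?M = (if plat xs (Suc k) then {Suc k} else {})" using Me by auto
      then show ?thesis using f2 k kd by simp
    qed
  qed

lemma ap_ins:
  assumes "\<forall>z\<in>set xs. z < m" "p \<le> length xs"
  shows "ap (ins p m xs) = ap xs + (if p = 0 \<or> killed xs p then 0 else 1)"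
proof -
  let ?P = "{i. plat xs i}"
  let ?A = "{i. plat xs i \<and> i + 1 < p}"
  let ?M = "{i. plat xs i \<and> p \<le> i + 1 \<and> i \<le> p}"
  let ?B = "{i. plat xs i \<and> p < i}"
  have fin: "finite ?A" "finite ?M" "finite ?B" by (rule finite_subset[OF _ plat_fin[of xs]]; blast)+
  have tri: "\<And>i::nat. i + 1 < p \<or> (p \<le> i + 1 \<and> i \<le> p) \<or> p < i" by linarith
  have Pe: "?P = ?A \<union> ?M \<union> ?B" using tri by blast
  have c1: "card (?A \<union> ?M) = card ?A + card ?M"
    by (rule card_Un_disjoint[OF fin(1) fin(2)]) (simp add: disjoint_iff)
  have c2: "card (?A \<union> ?M \<union> ?B) = card (?A \<union> ?M) + card ?B"
    by (rule card_Un_disjoint[OF finite_UnI[OF fin(1) fin(2)] fin(3)]) (simp add: disjoint_iff)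
  have cP: "card ?P = card ?A + card ?M + card ?B" unfolding Pe c2 c1 ..
  have cM: "card ?M = (if p = 0 \<or> \<not> killed xs p then 0 else 1)" by (rule cardM)
  have N: "{i. plat (ins p m xs) i} = ?A \<union> (if 1 \<le> p then {p} else {}) \<union> (\<lambda>i. i + 2) ` ?B"
    using plat_set_ins[OF assms] .
  have c3: "card (?A \<union> (if 1 \<le> p then {p} else {}) \<union> (\<lambda>i. i + 2) ` ?B)
     = card ?A + (if 1 \<le> p then 1 else 0) + card ?B"
  proof -
    have i: "inj_on (\<lambda>i. i + 2) ?B" by (auto simp: inj_on_def)
    have "card (?A \<union> (if 1 \<le> p then {p} else {})) = card ?A + (if 1 \<le> p then 1 else 0)"
      using fin by (cases "1 \<le> p") (simp_all add: card_insert_if)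
    moreover have "card (?A \<union> (if 1 \<le> p then {p} else {}) \<union> (\<lambda>i. i + 2) ` ?B) =
       card (?A \<union> (if 1 \<le> p then {p} else {})) + card ((\<lambda>i. i + 2) ` ?B)"
      by (rule card_Un_disjoint) (use fin in \<open>auto simp add: disjoint_iff\<close>)
    ultimately show ?thesis unfolding card_image[OF i] by simp
  qed
  have e1: "ap (ins p m xs) = card ?A + (if 1 \<le> p then 1 else 0) + card ?B"
    unfolding ap_plat N c3 ..
  have e2: "ap xs = card ?A + card ?M + card ?B" unfolding ap_plat cP ..
  show ?thesis unfolding e1 e2 cM by simp
qed


lemma killed_range: "killed xs p \<Longrightarrow> 1 \<le> p \<and> p < length xs"
  by (auto simp: killed_def plat_def)

lemma card_killed_odd: "card {p. killed xs p \<and> odd p} = ap xs"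
proof -
  let ?f = "\<lambda>j::nat. if odd j then j else j + 1"
  have inj: "inj_on ?f {i. plat xs i}"
  proof (rule inj_onI)
    fix a b assume a: "a \<in> {i. plat xs i}" and b: "b \<in> {i. plat xs i}" and e: "?f a = ?f b"
    show "a = b"
    proof (cases "odd a"; cases "odd b")
      assume "odd a" "\<not> odd b"
      then have "a = Suc b" using e by simp
      then show ?thesis using a b plat_not_both by blast
    next
      assume "\<not> odd a" "odd b"
      then have "b = Suc a" using e by simp
      then show ?thesis using a b plat_not_both by blast
    qed (use e in auto)
  qed
  have img: "?f ` {i. plat xs i} = {p. killed xs p \<and> odd p}"
  proof (rule set_eqI, rule iffI)
    fix p assume "p \<in> ?f ` {i. plat xs i}"
    then obtain j where j: "plat xs j" "p = ?f j" by blast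
    show "p \<in> {p. killed xs p \<and> odd p}"
    proof (cases "odd j")
      case True then show ?thesis using j by (simp add: killed_def)
    next
      case False then show ?thesis using j by (simp add: killed_def)
    qed
  next
    fix p assume "p \<in> {p. killed xs p \<and> odd p}"
    then have p: "killed xs p" "odd p" by auto
    then have "p \<ge> 1" using killed_range by blast
    show "p \<in> ?f ` {i. plat xs i}"
    proof (cases "plat xs p")
      case True then show ?thesis using p by (intro image_eqI[of _ _ p]) auto
    next
      case False
      then have "plat xs (p - 1)" using p by (simp add: killed_def)
      moreover have "?f (p - 1) = p" using p \<open>p \<ge> 1\<close> by (cases p) auto
      ultimately show ?thesis by (intro image_eqI[of _ _ "p - 1"]) auto
    qed
  qed
  show ?thesis using card_image[OF inj] unfolding img ap_plat by simp
qed

lemma card_killed_even: "card {p. killed xs p \<and> even p} = ap xs"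
proof -
  let ?f = "\<lambda>j::nat. if even j then j else j + 1"
  have inj: "inj_on ?f {i. plat xs i}"
  proof (rule inj_onI)
    fix a b assume a: "a \<in> {i. plat xs i}" and b: "b \<in> {i. plat xs i}" and e: "?f a = ?f b"
    show "a = b"
    proof (cases "even a"; cases "even b")
      assume "even a" "\<not> even b"
      then have "a = Suc b" using e by simp
      then show ?thesis using a b plat_not_both by blast
    next
      assume "\<not> even a" "even b"
      then have "b = Suc a" using e by simp
      then show ?thesis using a b plat_not_both by blast
    qed (use e in auto)
  qed
  have img: "?f ` {i. plat xs i} = {p. killed xs p \<and> even p}"
  proof (rule set_eqI, rule iffI)
    fix p assume "p \<in> ?f ` {i. plat xs i}"
    then obtain j where j: "plat xs j" "p = ?f j" by blast
    show "p \<in> {p. killed xs p \<and> even p}"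
    proof (cases "even j")
      case True then show ?thesis using j by (simp add: killed_def)
    next
      case False then show ?thesis using j by (simp add: killed_def)
    qed
  next
    fix p assume "p \<in> {p. killed xs p \<and> even p}"
    then have p: "killed xs p" "even p" by auto
    then have "p \<ge> 1" using killed_range by blast
    show "p \<in> ?f ` {i. plat xs i}"
    proof (cases "plat xs p")
      case True then show ?thesis using p by (intro image_eqI[of _ _ p]) auto
    next
      case False
      then have "plat xs (p - 1)" using p by (simp add: killed_def)
      moreover have "?f (p - 1) = p" using p \<open>p \<ge> 1\<close> by (cases p) auto
      ultimately show ?thesis by (intro image_eqI[of _ _ "p - 1"]) auto
    qed
  qed
  show ?thesis using card_image[OF inj] unfolding img ap_plat by simp
qed


definition ascP :: "nat list \<Rightarrow> nat \<Rightarrow> bool" where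
  "ascP s i = (1 \<le> i \<and> i < length s \<and> s ! (i - 1) < s ! i)"

lemma asc_ascP: "asc s = card {i. ascP s i}"
  by (simp add: asc_def ascP_def)

lemma ascP_fin: "finite {i. ascP s i}"
  by (rule finite_subset[of _ "{..<length s}"]) (auto simp: ascP_def)

lemma ascP_set_ins1:
  assumes "\<forall>z\<in>set xs. z < m" "p \<le> length xs"
  shows "{i. ascP (ins1 p m xs) i} = {i. ascP xs i \<and> i < p} \<union> (if 1 \<le> p then {p} else {})
     \<union> Suc ` {i. ascP xs i \<and> p < i}" (is "?L = ?R")
proof (rule set_eqI)
  fix j
  have lt: "\<And>i. i < length xs \<Longrightarrow> xs ! i < m" using assms(1) by auto
  show "j \<in> ?L \<longleftrightarrow> j \<in> ?R"
  proof (cases "j < p")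
    case True
    then show ?thesis using assms(2) by (auto simp: ascP_def nth_ins1)
  next
    case f1: False
    show ?thesis
    proof (cases "j = p")
      case True
      then show ?thesis using assms(2) lt[of "p - 1"] by (auto simp: ascP_def nth_ins1)
    next
      case f2: False
      show ?thesis
      proof (cases "j = p + 1")
        case True
        then show ?thesis using assms(2) lt[of p] by (auto simp: ascP_def nth_ins1)
      next
        case f3: False
        have "p + 2 \<le> j" using f1 f2 f3 by simp
        then obtain k where k: "j = p + 2 + k" using le_Suc_ex by blast
        have "j \<in> ?R \<longleftrightarrow> ascP xs (p + 1 + k)"
          using k by (auto simp: image_iff)
        moreover have "j \<in> ?L \<longleftrightarrow> ascP xs (p + 1 + k)"
        proof -
          have e1: "j - 1 = p + 1 + k" "j = Suc (p + 1 + k)" "p + 1 + k - 1 = p + k" using k by auto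
          show ?thesis unfolding ascP_def e1 using assms(2) by (auto simp: nth_ins1)
        qed
        ultimately show ?thesis by simp
      qed
    qed
  qed
qed

lemma asc_ins1:
  assumes "\<forall>z\<in>set xs. z < m" "p \<le> length xs"
  shows "asc (ins1 p m xs) = asc xs + (if p = 0 \<or> ascP xs p then 0 else 1)"
proof -
  let ?A = "{i. ascP xs i \<and> i < p}"
  let ?M = "{i. ascP xs i \<and> i = p}"
  let ?B = "{i. ascP xs i \<and> p < i}"
  have fin: "finite ?A" "finite ?M" "finite ?B" by (rule finite_subset[OF _ ascP_fin[of xs]]; blast)+
  have tri: "\<And>i::nat. i < p \<or> i = p \<or> p < i" by linarith
  have Pe: "{i. ascP xs i} = ?A \<union> ?M \<union> ?B" using tri by blast
  have c1: "card (?A \<union> ?M) = card ?A + card ?M"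
    by (rule card_Un_disjoint[OF fin(1) fin(2)]) (simp add: disjoint_iff)
  have c2: "card (?A \<union> ?M \<union> ?B) = card (?A \<union> ?M) + card ?B"
    by (rule card_Un_disjoint[OF finite_UnI[OF fin(1) fin(2)] fin(3)]) (simp add: disjoint_iff)
  have cP: "card {i. ascP xs i} = card ?A + card ?M + card ?B" unfolding Pe c2 c1 ..
  have cM: "card ?M = (if ascP xs p then 1 else 0)"
  proof (cases "ascP xs p")
    case True then have "?M = {p}" by blast
    then show ?thesis using True by simp
  next
    case False then have "?M = {}" by blast
    then show ?thesis using False by simp
  qed
  have p0: "ascP xs p \<Longrightarrow> 1 \<le> p" by (simp add: ascP_def)
  have N: "{i. ascP (ins1 p m xs) i} = ?A \<union> (if 1 \<le> p then {p} else {}) \<union> Suc ` ?B"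
    using ascP_set_ins1[OF assms] .
  have c3: "card (?A \<union> (if 1 \<le> p then {p} else {}) \<union> Suc ` ?B)
     = card ?A + (if 1 \<le> p then 1 else 0) + card ?B"
  proof -
    have i: "inj_on Suc ?B" by (auto simp: inj_on_def)
    have "card (?A \<union> (if 1 \<le> p then {p} else {})) = card ?A + (if 1 \<le> p then 1 else 0)"
      using fin by (cases "1 \<le> p") (simp_all add: card_insert_if)
    moreover have "card (?A \<union> (if 1 \<le> p then {p} else {}) \<union> Suc ` ?B) =
       card (?A \<union> (if 1 \<le> p then {p} else {})) + card (Suc ` ?B)"
      by (rule card_Un_disjoint) (use fin in \<open>auto simp add: disjoint_iff\<close>)
    ultimately show ?thesis unfolding card_image[OF i] by simp
  qed
  have e1: "asc (ins1 p m xs) = card ?A + (if 1 \<le> p then 1 else 0) + card ?B"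
    unfolding asc_ascP N c3 ..
  have e2: "asc xs = card ?A + card ?M + card ?B" unfolding asc_ascP cP ..
  show ?thesis unfolding e1 e2 cM using p0 by auto
qed

lemma ascP_range: "ascP xs p \<Longrightarrow> 1 \<le> p \<and> p < length xs"
  by (simp add: ascP_def)

definition fi :: "nat list \<Rightarrow> nat \<Rightarrow> nat" where
  "fi xs k = (LEAST i. i < length xs \<and> xs ! i = k)"

lemma fi_char:
  assumes "f < length xs" "xs ! f = k" "\<forall>j<f. xs ! j \<noteq> k"
  shows "fi xs k = f"
  unfolding fi_def
  by (rule Least_equality) (use assms in \<open>auto simp: not_less[symmetric]\<close>)

lemma fi_props:
  assumes "k \<in> set xs"
  shows "fi xs k < length xs" "xs ! fi xs k = k" "\<forall>j<fi xs k. xs ! j \<noteq> k"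
proof -
  obtain i where i: "i < length xs" "xs ! i = k" using assms by (auto simp: in_set_conv_nth)
  have "fi xs k < length xs \<and> xs ! fi xs k = k"
    unfolding fi_def by (rule LeastI[of _ i]) (use i in auto)
  then show "fi xs k < length xs" "xs ! fi xs k = k" by auto
  show "\<forall>j<fi xs k. xs ! j \<noteq> k"
  proof (intro allI impI)
    fix j assume j: "j < fi xs k"
    show "xs ! j \<noteq> k"
    proof
      assume "xs ! j = k"
      moreover have "j < length xs" using j \<open>fi xs k < length xs\<close> by simp
      ultimately have "fi xs k \<le> j" unfolding fi_def by (intro Least_le) auto
      then show False using j by simp
    qed
  qed
qed

lemma even_fi: "even_idx s = card {k \<in> set s. even (Suc (fi s k))}"
  by (simp add: even_idx_def fi_def)

lemma fi_ins_m:
  assumes "m \<notin> set xs" "p \<le> length xs"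
  shows "fi (ins p m xs) m = p"
proof (rule fi_char)
  show "p < length (ins p m xs)" using assms by simp
  show "ins p m xs ! p = m" using assms by (simp add: nth_ins)
  show "\<forall>j<p. ins p m xs ! j \<noteq> m" using assms by (auto simp: nth_ins in_set_conv_nth)
qed

lemma fi_ins_other:
  assumes "k \<in> set xs" "k \<noteq> m" "p \<le> length xs"
  shows "fi (ins p m xs) k = (if fi xs k < p then fi xs k else fi xs k + 2)"
proof (rule fi_char)
  note fp = fi_props[OF assms(1)]
  show "(if fi xs k < p then fi xs k else fi xs k + 2) < length (ins p m xs)"
    using fp assms by simp
  show "ins p m xs ! (if fi xs k < p then fi xs k else fi xs k + 2) = k"
    using fp assms by (auto simp: nth_ins)
  show "\<forall>j<(if fi xs k < p then fi xs k else fi xs k + 2). ins p m xs ! j \<noteq> k"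
  proof (intro allI impI)
    fix j assume j: "j < (if fi xs k < p then fi xs k else fi xs k + 2)"
    have jl: "j < length xs + 2" using j fp(1) by (auto split: if_splits)
    show "ins p m xs ! j \<noteq> k"
    proof (cases "j < p")
      case True
      then have "j < fi xs k" using j by (auto split: if_splits)
      then show ?thesis using True fp(3) assms(3) jl by (simp add: nth_ins)
    next
      case False
      show ?thesis
      proof (cases "j < p + 2")
        case True then show ?thesis using False assms jl by (simp add: nth_ins)
      next
        case f2: False
        then have "j - 2 < fi xs k" using j False by (auto split: if_splits)
        then show ?thesis using False f2 fp(3) assms(3) jl by (simp add: nth_ins)
      qed
    qed
  qed
qed

lemma even_ins:
  assumes "\<forall>z\<in>set xs. z < m" "p \<le> length xs"
  shows "even_idx (ins p m xs) = even_idx xs + (if odd p then 1 else 0)"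
proof -
  have mn: "m \<notin> set xs" using assms(1) by blast
  have S: "{k \<in> set (ins p m xs). even (Suc (fi (ins p m xs) k))} =
      (if odd p then {m} else {}) \<union> {k \<in> set xs. even (Suc (fi xs k))}"
  proof (rule set_eqI)
    fix k
    show "k \<in> {k \<in> set (ins p m xs). even (Suc (fi (ins p m xs) k))} \<longleftrightarrow>
      k \<in> (if odd p then {m} else {}) \<union> {k \<in> set xs. even (Suc (fi xs k))}"
    proof (cases "k = m")
      case True then show ?thesis using fi_ins_m[OF mn assms(2)] mn assms(2) by auto
    next
      case False
      show ?thesis
      proof (cases "k \<in> set xs")
        case True then show ?thesis using fi_ins_other[OF True False assms(2)] False assms(2) by auto
      next
        case f2: False then show ?thesis using False assms(2) by auto
      qed
    qed
  qed
  have fin: "finite {k \<in> set xs. even (Suc (fi xs k))}" by simp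
  have "m \<notin> {k \<in> set xs. even (Suc (fi xs k))}" using mn by simp
  then show ?thesis unfolding even_fi S using fin by (cases "odd p") simp_all
qed


lemma sum_if_const:
  fixes u v :: "'a::comm_ring_1"
  assumes "finite S"
  shows "(\<Sum>p\<in>S. if p \<in> K then u else v) = of_nat (card (S \<inter> K)) * u + of_nat (card S - card (S \<inter> K)) * v"
proof -
  have "(\<Sum>p\<in>S. if p \<in> K then u else v) = sum (\<lambda>_. u) (S \<inter> {x. x \<in> K}) + sum (\<lambda>_. v) (S \<inter> - {x. x \<in> K})"
    by (rule sum.If_cases[OF assms])
  moreover have "S \<inter> {x. x \<in> K} = S \<inter> K" by blast
  moreover have "card (S \<inter> - {x. x \<in> K}) = card S - card (S \<inter> K)"
  proof -
    have "S \<inter> - {x. x \<in> K} = S - (S \<inter> K)" by blast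
    then show ?thesis using assms by (simp add: card_Diff_subset)
  qed
  ultimately show ?thesis by simp
qed

lemma card_odd: "card {p \<in> {1..2*n}. odd p} = n"
proof -
  have "{p \<in> {1..2*n}. odd p} = (\<lambda>k. 2*k+1) ` {..<n}"
  proof (rule set_eqI, rule iffI)
    fix p assume "p \<in> {p \<in> {1..2*n}. odd p}"
    then obtain k where "p = 2*k+1" "k < n" by (auto elim!: oddE)
    then show "p \<in> (\<lambda>k. 2*k+1) ` {..<n}" by auto
  qed auto
  moreover have "inj_on (\<lambda>k::nat. 2*k+1) {..<n}" by (auto simp: inj_on_def)
  ultimately show ?thesis by (simp add: card_image)
qed

lemma card_even: "card {p \<in> {1..2*n}. even p} = n"
proof -
  have "{p \<in> {1..2*n}. even p} = (\<lambda>k. 2*k+2) ` {..<n}"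
  proof (rule set_eqI, rule iffI)
    fix p assume p: "p \<in> {p \<in> {1..2*n}. even p}"
    then obtain k where k: "p = 2*k" by (auto elim!: evenE)
    then have "k \<ge> 1" "k \<le> n" using p by auto
    then show "p \<in> (\<lambda>k. 2*k+2) ` {..<n}" using k by (intro image_eqI[of _ _ "k - 1"]) auto
  qed auto
  moreover have "inj_on (\<lambda>k::nat. 2*k+2) {..<n}" by (auto simp: inj_on_def)
  ultimately show ?thesis by (simp add: card_image)
qed

lemma slot_sum_Q:
  fixes g :: "nat \<Rightarrow> nat \<Rightarrow> nat \<Rightarrow> 'a::comm_ring_1"
  assumes K: "K \<subseteq> {1..2*n}" "card {p\<in>K. odd p} = a" "card {p\<in>K. even p} = a"
  shows "(\<Sum>p\<in>{0..2*n}. g (l + (if p = 0 then 1 else 0)) (a + (if p = 0 \<or> p \<in> K then 0 else 1))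
            (e + (if odd p then 1 else 0)))
       = g (l+1) a e + of_nat a * (g l a e + g l a (e+1)) + of_nat (n-a) * (g l (a+1) e + g l (a+1) (e+1))"
proof -
  let ?F = "\<lambda>p. g (l + (if p = 0 then 1 else 0)) (a + (if p = 0 \<or> p \<in> K then 0 else 1))
            (e + (if odd p then 1 else 0))"
  let ?O = "{p \<in> {1..2*n}. odd p}"
  let ?E = "{p \<in> {1..2*n}. even p}"
  have d: "{0..2*n} = insert 0 (?O \<union> ?E)" by auto
  have u: "sum ?F (?O \<union> ?E) = sum ?F ?O + sum ?F ?E"
    by (rule sum.union_disjoint) auto
  have s1: "sum ?F {0..2*n} = ?F 0 + (sum ?F ?O + sum ?F ?E)"
    unfolding d u[symmetric] by (rule sum.insert) auto
  have "sum ?F ?O = (\<Sum>p\<in>?O. if p \<in> K then g l a (e+1) else g l (a+1) (e+1))"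
    by (rule sum.cong) auto
  also have "\<dots> = of_nat a * g l a (e+1) + of_nat (n - a) * g l (a+1) (e+1)"
  proof -
    have i: "?O \<inter> K = {p\<in>K. odd p}" using K(1) by auto
    have f: "finite ?O" by simp
    show ?thesis unfolding sum_if_const[OF f] i K(2) card_odd by simp
  qed
  finally have sO: "sum ?F ?O = of_nat a * g l a (e+1) + of_nat (n - a) * g l (a+1) (e+1)" .
  have "sum ?F ?E = (\<Sum>p\<in>?E. if p \<in> K then g l a e else g l (a+1) e)"
    by (rule sum.cong) auto
  also have "\<dots> = of_nat a * g l a e + of_nat (n - a) * g l (a+1) e"
  proof -
    have i: "?E \<inter> K = {p\<in>K. even p}" using K(1) by auto
    have f: "finite ?E" by simp
    show ?thesis unfolding sum_if_const[OF f] i K(3) card_even by simp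
  qed
  finally have sE: "sum ?F ?E = of_nat a * g l a e + of_nat (n - a) * g l (a+1) e" .
  show ?thesis unfolding s1 sO sE by (simp add: algebra_simps)
qed

lemma slot_sum_P:
  fixes g :: "nat \<Rightarrow> nat \<Rightarrow> nat \<Rightarrow> 'a::comm_ring_1"
  assumes "A \<subseteq> {1..n}" "card A = a"
  shows "(\<Sum>p\<in>{1..n}. g l (a + (if p \<in> A then 0 else 1)) c + g l (a + (if p \<in> A then 0 else 1)) (c+1))
       = of_nat a * (g l a c + g l a (c+1)) + of_nat (n-a) * (g l (a+1) c + g l (a+1) (c+1))"
proof -
  have "(\<Sum>p\<in>{1..n}. g l (a + (if p \<in> A then 0 else 1)) c + g l (a + (if p \<in> A then 0 else 1)) (c+1))
      = (\<Sum>p\<in>{1..n}. if p \<in> A then g l a c + g l a (c+1) else g l (a+1) c + g l (a+1) (c+1))"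
    by (rule sum.cong) auto
  also have "\<dots> = of_nat a * (g l a c + g l a (c+1)) + of_nat (n-a) * (g l (a+1) c + g l (a+1) (c+1))"
  proof -
    have "{1..n} \<inter> A = A" using assms(1) by auto
    then show ?thesis by (simp add: sum_if_const assms(2))
  qed
  finally show ?thesis .
qed


lemma multiset2_Suc: "multiset2 (Suc n) = multiset2 n + {#Suc n, Suc n#}"
  by (simp add: multiset2_def)

lemma multiset2_0: "multiset2 0 = {#}"
  by (simp add: multiset2_def)

lemma set_multiset2: "set_mset (multiset2 n) = {1..n}"
  by (induction n) (auto simp: multiset2_Suc multiset2_0)

lemma size_multiset2: "size (multiset2 n) = 2 * n"
  by (induction n) (auto simp: multiset2_Suc multiset2_0)

lemma count_multiset2_top: "count (multiset2 (Suc n)) (Suc n) = 2"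
proof -
  have "Suc n \<notin># multiset2 n" using set_multiset2[of n] by auto
  then show ?thesis by (simp add: multiset2_Suc not_in_iff)
qed

definition stir_ok :: "nat list \<Rightarrow> bool" where
  "stir_ok w = (\<forall>i j k. i < j \<and> j < k \<and> k < length w \<and> w ! i = w ! k \<longrightarrow> w ! j > w ! i)"

lemma stirling_perms_iff: "\<sigma> \<in> stirling_perms n \<longleftrightarrow> mset \<sigma> = multiset2 n \<and> stir_ok \<sigma>"
  by (simp add: stirling_perms_def stir_ok_def)

lemma Q_props:
  assumes "\<sigma> \<in> stirling_perms n"
  shows "length \<sigma> = 2 * n" "set \<sigma> = {1..n}" "\<forall>z\<in>set \<sigma>. z < Suc n"
proof -
  have m: "mset \<sigma> = multiset2 n" using assms by (simp add: stirling_perms_iff)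
  show "length \<sigma> = 2 * n" using arg_cong[OF m, of size] by (simp add: size_multiset2)
  show s: "set \<sigma> = {1..n}" using arg_cong[OF m, of set_mset] by (simp add: set_multiset2)
  show "\<forall>z\<in>set \<sigma>. z < Suc n" using s by auto
qed

lemma nth_ins_shift:
  assumes "p \<le> length xs" "i < length xs"
  shows "ins p m xs ! (if i < p then i else i + 2) = xs ! i"
  using assms by (auto simp: nth_ins)

lemma nth_ins_back:
  assumes "p \<le> length xs" "i < length xs + 2" "\<not> (p \<le> i \<and> i < p + 2)"
  shows "ins p m xs ! i = xs ! (if i < p then i else i - 2)" "(if i < p then i else i - 2) < length xs"
  using assms by (auto simp: nth_ins)

lemma nth_ins_mid: "p \<le> length xs \<Longrightarrow> p \<le> i \<Longrightarrow> i < p + 2 \<Longrightarrow> ins p m xs ! i = m"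
  by (simp add: nth_ins)

lemma stir_ok_ins:
  assumes ok: "stir_ok xs" and lt: "\<forall>z\<in>set xs. z < m" and p: "p \<le> length xs"
  shows "stir_ok (ins p m xs)"
  unfolding stir_ok_def
proof (intro allI impI)
  fix i j k assume a: "i < j \<and> j < k \<and> k < length (ins p m xs) \<and> ins p m xs ! i = ins p m xs ! k"
  let ?w = "ins p m xs"
  let ?u = "\<lambda>i. if i < p then i else i - 2"
  have len: "length ?w = length xs + 2" using p by simp
  have ltn: "\<And>t. t < length xs \<Longrightarrow> xs ! t < m" using lt by auto
  show "?w ! j > ?w ! i"
  proof (cases "p \<le> i \<and> i < p + 2")
    case True
    then have wi: "?w ! i = m" using nth_ins_mid[OF p] by blast
    have "p \<le> k \<and> k < p + 2"
    proof (rule ccontr)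
      assume "\<not> (p \<le> k \<and> k < p + 2)"
      then have "?w ! k = xs ! ?u k" "?u k < length xs" using nth_ins_back[OF p, where i=k] a len by auto
      then show False using a wi ltn by fastforce
    qed
    then show ?thesis using True a by linarith
  next
    case False
    then have wi: "?w ! i = xs ! ?u i" "?u i < length xs" using nth_ins_back[OF p, where i=i] a len by auto
    have kb: "\<not> (p \<le> k \<and> k < p + 2)"
    proof
      assume "p \<le> k \<and> k < p + 2"
      then have "?w ! k = m" using nth_ins_mid[OF p] by blast
      then show False using a wi ltn by fastforce
    qed
    then have wk: "?w ! k = xs ! ?u k" "?u k < length xs" using nth_ins_back[OF p, where i=k] a len by auto
    show ?thesis
    proof (cases "p \<le> j \<and> j < p + 2")
      case True
      then have "?w ! j = m" using nth_ins_mid[OF p] by blast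
      then show ?thesis using wi ltn by simp
    next
      case jb: False
      then have wj: "?w ! j = xs ! ?u j" "?u j < length xs" using nth_ins_back[OF p, where i=j] a len by auto
      have "?u i < ?u j" "?u j < ?u k" using a False jb kb by auto
      then have "xs ! ?u j > xs ! ?u i" using ok wk a wi unfolding stir_ok_def by metis
      then show ?thesis using wi wj by simp
    qed
  qed
qed



lemma stir_ok_del:
  assumes ok: "stir_ok (ins p m xs)" and p: "p \<le> length xs"
  shows "stir_ok xs"
  unfolding stir_ok_def
proof (intro allI impI)
  fix i j k assume a: "i < j \<and> j < k \<and> k < length xs \<and> xs ! i = xs ! k"
  let ?s = "\<lambda>i. if i < p then i else i + 2"
  have e: "\<And>t. t < length xs \<Longrightarrow> ins p m xs ! ?s t = xs ! t" by (rule nth_ins_shift[OF p])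
  have mono: "\<And>x y. x < y \<Longrightarrow> ?s x < ?s y" by simp
  have "?s i < ?s j" "?s j < ?s k" using mono a by blast+
  moreover have "?s k < length (ins p m xs)" using a p by simp
  moreover have "ins p m xs ! ?s i = ins p m xs ! ?s k" using e a by simp
  ultimately have "ins p m xs ! ?s j > ins p m xs ! ?s i" using ok unfolding stir_ok_def by blast
  then show "xs ! j > xs ! i" using e a by simp
qed

lemma take_drop_ins: "p \<le> length xs \<Longrightarrow> take p (ins p m xs) @ drop (p + 2) (ins p m xs) = xs"
  by (simp add: ins_def)

lemma take_drop_ins1: "p \<le> length xs \<Longrightarrow> take p (ins1 p m xs) @ drop (p + 1) (ins1 p m xs) = xs"
  by (simp add: ins1_def)

lemma fi_ins1_m:
  assumes "m \<notin> set xs" "p \<le> length xs"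
  shows "fi (ins1 p m xs) m = p"
proof (rule fi_char)
  show "p < length (ins1 p m xs)" using assms by simp
  show "ins1 p m xs ! p = m" using assms by (simp add: nth_ins1)
  show "\<forall>j<p. ins1 p m xs ! j \<noteq> m" using assms by (auto simp: nth_ins1 in_set_conv_nth)
qed

lemma ins_inj:
  assumes "m \<notin> set xs" "m \<notin> set ys" "p \<le> length xs" "q \<le> length ys" "ins p m xs = ins q m ys"
  shows "xs = ys \<and> p = q"
proof -
  have "p = fi (ins p m xs) m" using fi_ins_m[OF assms(1,3)] by simp
  also have "\<dots> = fi (ins q m ys) m" unfolding assms(5) ..
  also have "\<dots> = q" using fi_ins_m[OF assms(2,4)] by simp
  finally have "p = q" .
  then show ?thesis using take_drop_ins[OF assms(3), of m] take_drop_ins[OF assms(4), of m] assms(5) by metis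
qed

lemma ins1_inj:
  assumes "m \<notin> set xs" "m \<notin> set ys" "p \<le> length xs" "q \<le> length ys" "ins1 p m xs = ins1 q m ys"
  shows "xs = ys \<and> p = q"
proof -
  have "p = fi (ins1 p m xs) m" using fi_ins1_m[OF assms(1,3)] by simp
  also have "\<dots> = fi (ins1 q m ys) m" unfolding assms(5) ..
  also have "\<dots> = q" using fi_ins1_m[OF assms(2,4)] by simp
  finally have "p = q" .
  then show ?thesis using take_drop_ins1[OF assms(3), of m] take_drop_ins1[OF assms(4), of m] assms(5) by metis
qed



lemma Q_ins:
  assumes "\<sigma> \<in> stirling_perms n" "p \<le> 2 * n"
  shows "ins p (Suc n) \<sigma> \<in> stirling_perms (Suc n)"
proof -
  note qp = Q_props[OF assms(1)]
  have "mset (ins p (Suc n) \<sigma>) = multiset2 (Suc n)"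
    using assms(1) by (simp add: mset_ins multiset2_Suc stirling_perms_iff)
  moreover have "stir_ok (ins p (Suc n) \<sigma>)"
    using stir_ok_ins[of \<sigma> "Suc n" p] assms qp by (simp add: stirling_perms_iff)
  ultimately show ?thesis by (simp add: stirling_perms_iff)
qed

lemma Q_dec:
  assumes "\<tau> \<in> stirling_perms (Suc n)"
  shows "\<exists>\<sigma> p. \<sigma> \<in> stirling_perms n \<and> p \<le> 2 * n \<and> \<tau> = ins p (Suc n) \<sigma>"
proof -
  let ?m = "Suc n"
  note qp = Q_props[OF assms]
  have ok: "stir_ok \<tau>" and ms: "mset \<tau> = multiset2 (Suc n)" using assms by (auto simp: stirling_perms_iff)
  have mi: "?m \<in> set \<tau>" using qp(2) by simp
  define p where "p = fi \<tau> ?m"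
  note fp = fi_props[OF mi, folded p_def]
  have c2: "card {i. i < length \<tau> \<and> \<tau> ! i = ?m} = 2"
  proof -
    have "count (mset \<tau>) ?m = 2" using ms count_multiset2_top by simp
    moreover have "count (mset \<tau>) ?m = card {i. i < length \<tau> \<and> ?m = \<tau> ! i}"
      unfolding count_mset count_list_eq_length_filter length_filter_conv_card ..
    moreover have "{i. i < length \<tau> \<and> ?m = \<tau> ! i} = {i. i < length \<tau> \<and> \<tau> ! i = ?m}" by auto
    ultimately show ?thesis by simp
  qed
  obtain q where q: "q < length \<tau>" "\<tau> ! q = ?m" "q \<noteq> p"
  proof -
    have "\<not> {i. i < length \<tau> \<and> \<tau> ! i = ?m} \<subseteq> {p}"
    proof
      assume "{i. i < length \<tau> \<and> \<tau> ! i = ?m} \<subseteq> {p}"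
      then have "card {i. i < length \<tau> \<and> \<tau> ! i = ?m} \<le> card {p}" by (intro card_mono) auto
      then show False using c2 by simp
    qed
    then show ?thesis using that by blast
  qed
  have "\<not> q < p" using fp(3) q by blast
  then have "p < q" using q(3) by simp
  have q1: "q = Suc p"
  proof (rule ccontr)
    assume "q \<noteq> Suc p"
    then have "p < Suc p" "Suc p < q" using \<open>p < q\<close> by auto
    then have "p < Suc p \<and> Suc p < q \<and> q < length \<tau> \<and> \<tau> ! p = \<tau> ! q" using q fp by simp
    then have "\<tau> ! Suc p > \<tau> ! p" using ok unfolding stir_ok_def by blast
    moreover have "\<tau> ! Suc p \<in> set \<tau>" using \<open>Suc p < q\<close> q(1) by simp
    ultimately show False using qp(2) fp(2) by auto
  qed
  define \<sigma> where "\<sigma> = take p \<tau> @ drop (p + 2) \<tau>"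
  have lenp: "p + 2 \<le> length \<tau>" using q q1 by simp
  have lens: "length \<sigma> = length \<tau> - 2" using lenp by (simp add: \<sigma>_def)
  have pl: "p \<le> length \<sigma>" using lens lenp by simp
  have d1: "drop p \<tau> = \<tau> ! p # drop (Suc p) \<tau>" using lenp by (intro Cons_nth_drop_Suc[symmetric]) simp
  have d2: "drop (Suc p) \<tau> = \<tau> ! Suc p # drop (Suc (Suc p)) \<tau>" using lenp by (intro Cons_nth_drop_Suc[symmetric]) simp
  have "\<tau> = take p \<tau> @ drop p \<tau>" by simp
  also have "\<dots> = take p \<tau> @ \<tau> ! p # \<tau> ! Suc p # drop (Suc (Suc p)) \<tau>" unfolding d1 d2 ..
  also have "\<dots> = ins p ?m \<sigma>" using fp q q1 lenp by (simp add: ins_def \<sigma>_def)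
  finally have te: "\<tau> = ins p ?m \<sigma>" .
  have "mset \<sigma> = multiset2 n" using ms unfolding te mset_ins multiset2_Suc by simp
  moreover have "stir_ok \<sigma>" using stir_ok_del[of p ?m \<sigma>] ok te pl by simp
  ultimately have "\<sigma> \<in> stirling_perms n" by (simp add: stirling_perms_iff)
  moreover have "p \<le> 2 * n" using pl lens qp(1) by simp
  ultimately show ?thesis using te by blast
qed



lemma Q_Suc: "stirling_perms (Suc n) = (\<lambda>(\<sigma>, p). ins p (Suc n) \<sigma>) ` (stirling_perms n \<times> {0..2*n})"
  using Q_ins Q_dec by fastforce

lemma Q_inj: "inj_on (\<lambda>(\<sigma>, p). ins p (Suc n) \<sigma>) (stirling_perms n \<times> {0..2*n})"
proof (rule inj_onI)
  fix x y assume x: "x \<in> stirling_perms n \<times> {0..2*n}" and y: "y \<in> stirling_perms n \<times> {0..2*n}"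
    and e: "(\<lambda>(\<sigma>, p). ins p (Suc n) \<sigma>) x = (\<lambda>(\<sigma>, p). ins p (Suc n) \<sigma>) y"
  obtain s1 p1 where 1: "x = (s1, p1)" by fastforce
  obtain s2 p2 where 2: "y = (s2, p2)" by fastforce
  have a1: "s1 \<in> stirling_perms n" "p1 \<le> 2*n" using x 1 by auto
  have a2: "s2 \<in> stirling_perms n" "p2 \<le> 2*n" using y 2 by auto
  show "x = y"
    using ins_inj[of "Suc n" s1 s2 p1 p2] Q_props[OF a1(1)] Q_props[OF a2(1)] a1 a2 e 1 2 by auto
qed


definition Phi :: "nat \<Rightarrow> (nat list \<times> nat set) \<times> (nat \<times> bool) \<Rightarrow> nat list \<times> nat set" where
  "Phi n x = (case x of ((\<pi>, M), (p, b)) \<Rightarrow> (ins1 p (Suc n) \<pi>, if b then insert (Suc n) M else M))"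

definition Dn :: "nat \<Rightarrow> (nat \<times> bool) set" where
  "Dn n = insert (0, False) ({1..n} \<times> UNIV)"

lemma MP_props:
  assumes "(\<pi>, M) \<in> marked_perms n"
  shows "distinct \<pi>" "set \<pi> = {1..n}" "length \<pi> = n" "M \<subseteq> set \<pi> - lrmin_vals \<pi>"
    "finite M" "Suc n \<notin> M" "\<forall>z\<in>set \<pi>. z < Suc n"
proof -
  show d: "distinct \<pi>" and s: "set \<pi> = {1..n}" and m: "M \<subseteq> set \<pi> - lrmin_vals \<pi>"
    using assms by (auto simp: marked_perms_def)
  show "length \<pi> = n" using distinct_card[OF d] s by simp
  show "finite M" using m finite_subset by blast
  show "Suc n \<notin> M" using m s by auto
  show "\<forall>z\<in>set \<pi>. z < Suc n" using s by auto
qed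

lemma MP_ins:
  assumes "(\<pi>, M) \<in> marked_perms n" "(p, b) \<in> Dn n"
  shows "Phi n ((\<pi>, M), (p, b)) \<in> marked_perms (Suc n)"
proof -
  note mp = MP_props[OF assms(1)]
  let ?m = "Suc n"
  have pl: "p \<le> length \<pi>" using assms(2) mp(3) by (auto simp: Dn_def)
  have bp: "b \<Longrightarrow> p \<noteq> 0" using assms(2) by (auto simp: Dn_def)
  have lv: "lrmin_vals (ins1 p ?m \<pi>) = (if p = 0 then insert ?m (lrmin_vals \<pi>) else lrmin_vals \<pi>)"
    using lv_ins1[OF mp(7) pl] .
  have mnl: "?m \<notin> lrmin_vals \<pi>" using lv_subset[of \<pi>] mp(2) by auto
  have "distinct (ins1 p ?m \<pi>)" using distinct_ins1[OF mp(1)] mp(2) by simp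
  moreover have "set (ins1 p ?m \<pi>) = {1..Suc n}" using mp(2) by auto
  moreover have "(if b then insert ?m M else M) \<subseteq> set (ins1 p ?m \<pi>) - lrmin_vals (ins1 p ?m \<pi>)"
  proof (cases b)
    case True
    then have "p \<noteq> 0" using bp by blast
    then show ?thesis using True lv mp(4) mnl by auto
  next
    case False
    show ?thesis using False lv mp(4) mp(6) by auto
  qed
  ultimately show ?thesis by (simp add: Phi_def marked_perms_def)
qed



lemma MP_dec:
  assumes "(\<pi>', M') \<in> marked_perms (Suc n)"
  shows "\<exists>x\<in>marked_perms n \<times> Dn n. (\<pi>', M') = Phi n x"
proof -
  let ?m = "Suc n"
  have d': "distinct \<pi>'" and s': "set \<pi>' = {1..Suc n}" and m': "M' \<subseteq> set \<pi>' - lrmin_vals \<pi>'"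
    using assms by (auto simp: marked_perms_def)
  have "?m \<in> set \<pi>'" using s' by simp
  then obtain A B where AB: "\<pi>' = A @ ?m # B" using split_list by metis
  let ?\<pi> = "A @ B"
  let ?p = "length A"
  have "distinct (A @ ?m # B)" using d' AB by simp
  then have dA: "?m \<notin> set A" "?m \<notin> set B" "distinct ?\<pi>" by simp_all
  have s: "set ?\<pi> = {1..n}"
  proof -
    have "set ?\<pi> = set (A @ ?m # B) - {?m}" using dA(1,2) by auto
    also have "\<dots> = set \<pi>' - {?m}" unfolding AB ..
    also have "\<dots> = {1..Suc n} - {Suc n}" unfolding s' ..
    also have "\<dots> = {1..n}" by auto
    finally show ?thesis .
  qed
  have len: "length ?\<pi> = n" using distinct_card[OF dA(3)] s by simp
  have te: "\<pi>' = ins1 ?p ?m ?\<pi>" using AB by (simp add: ins1_def)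
  have lt: "\<forall>z\<in>set ?\<pi>. z < ?m" using s by auto
  have pl: "?p \<le> length ?\<pi>" by simp
  have lv: "lrmin_vals \<pi>' = (if ?p = 0 then insert ?m (lrmin_vals ?\<pi>) else lrmin_vals ?\<pi>)"
    unfolding te using lv_ins1[OF lt pl] .
  define M where "M = M' - {?m}"
  define b where "b = (?m \<in> M')"
  have "(?\<pi>, M) \<in> marked_perms n"
  proof -
    have "M \<subseteq> set ?\<pi> - lrmin_vals ?\<pi>"
    proof
      fix x assume x: "x \<in> M"
      then have "x \<in> set \<pi>'" "x \<notin> lrmin_vals \<pi>'" "x \<noteq> ?m" using m' by (auto simp: M_def)
      then show "x \<in> set ?\<pi> - lrmin_vals ?\<pi>" using AB lv by (auto split: if_splits)
    qed
    then show ?thesis using dA s by (simp add: marked_perms_def)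
  qed
  moreover have "(?p, b) \<in> Dn n"
  proof (cases "?p = 0")
    case True
    then have "?m \<in> lrmin_vals \<pi>'" using lv by simp
    then have "\<not> b" using m' by (auto simp: b_def)
    then show ?thesis using True by (simp add: Dn_def)
  next
    case False
    then show ?thesis using len by (auto simp: Dn_def Suc_le_eq)
  qed
  moreover have "(\<pi>', M') = Phi n ((?\<pi>, M), (?p, b))"
    using te by (auto simp: Phi_def M_def b_def)
  ultimately show ?thesis by blast
qed



lemma MP_Suc: "marked_perms (Suc n) = Phi n ` (marked_perms n \<times> Dn n)"
proof
  show "marked_perms (Suc n) \<subseteq> Phi n ` (marked_perms n \<times> Dn n)"
    using MP_dec by fast
  show "Phi n ` (marked_perms n \<times> Dn n) \<subseteq> marked_perms (Suc n)"
    by (rule image_subsetI) (auto intro: MP_ins)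
qed

lemma MP_inj: "inj_on (Phi n) (marked_perms n \<times> Dn n)"
proof (rule inj_onI)
  fix x y assume x: "x \<in> marked_perms n \<times> Dn n" and y: "y \<in> marked_perms n \<times> Dn n"
    and e: "Phi n x = Phi n y"
  obtain p1 M1 q1 b1 where 1: "x = ((p1, M1), (q1, b1))"
    using that[of "fst (fst x)" "snd (fst x)" "fst (snd x)" "snd (snd x)"] by simp
  obtain p2 M2 q2 b2 where 2: "y = ((p2, M2), (q2, b2))"
    using that[of "fst (fst y)" "snd (fst y)" "fst (snd y)" "snd (snd y)"] by simp
  have a1: "(p1, M1) \<in> marked_perms n" "(q1, b1) \<in> Dn n" using x 1 by auto
  have a2: "(p2, M2) \<in> marked_perms n" "(q2, b2) \<in> Dn n" using y 2 by auto
  note m1 = MP_props[OF a1(1)] and m2 = MP_props[OF a2(1)]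
  have l1: "q1 \<le> length p1" using a1(2) m1(3) by (auto simp: Dn_def)
  have l2: "q2 \<le> length p2" using a2(2) m2(3) by (auto simp: Dn_def)
  have e1: "ins1 q1 (Suc n) p1 = ins1 q2 (Suc n) p2"
    and e2: "(if b1 then insert (Suc n) M1 else M1) = (if b2 then insert (Suc n) M2 else M2)"
    using e 1 2 by (simp_all add: Phi_def)
  have "p1 = p2 \<and> q1 = q2" using ins1_inj[OF _ _ l1 l2 e1] m1(2) m2(2) by simp
  moreover have "b1 = b2" using e2 m1(6) m2(6) by (auto split: if_splits)
  moreover have "M1 = M2" using e2 m1(6) m2(6) \<open>b1 = b2\<close>
    by (cases b1) (auto simp: insert_ident)
  ultimately show "x = y" using 1 2 by simp
qed


lemma Q_0: "stirling_perms 0 = {[]}"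
  by (auto simp: stirling_perms_def multiset2_0)

lemma MP_0: "marked_perms 0 = {([], {})}"
  by (auto simp: marked_perms_def)

lemma inner_Q:
  fixes g :: "nat \<Rightarrow> nat \<Rightarrow> nat \<Rightarrow> 'a::comm_ring_1"
  assumes "\<sigma> \<in> stirling_perms n"
  shows "(\<Sum>p\<in>{0..2*n}. g (lrmin (ins p (Suc n) \<sigma>)) (ap (ins p (Suc n) \<sigma>)) (even_idx (ins p (Suc n) \<sigma>)))
    = g (lrmin \<sigma> + 1) (ap \<sigma>) (even_idx \<sigma>)
      + of_nat (ap \<sigma>) * (g (lrmin \<sigma>) (ap \<sigma>) (even_idx \<sigma>) + g (lrmin \<sigma>) (ap \<sigma>) (even_idx \<sigma> + 1))
      + of_nat (n - ap \<sigma>) * (g (lrmin \<sigma>) (ap \<sigma> + 1) (even_idx \<sigma>) + g (lrmin \<sigma>) (ap \<sigma> + 1) (even_idx \<sigma> + 1))"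
proof -
  note qp = Q_props[OF assms]
  let ?K = "{p. killed \<sigma> p}"
  have "(\<Sum>p\<in>{0..2*n}. g (lrmin (ins p (Suc n) \<sigma>)) (ap (ins p (Suc n) \<sigma>)) (even_idx (ins p (Suc n) \<sigma>)))
      = (\<Sum>p\<in>{0..2*n}. g (lrmin \<sigma> + (if p = 0 then 1 else 0)) (ap \<sigma> + (if p = 0 \<or> p \<in> ?K then 0 else 1))
            (even_idx \<sigma> + (if odd p then 1 else 0)))"
  proof (rule sum.cong[OF refl])
    fix p assume "p \<in> {0..2*n}"
    then have pl: "p \<le> length \<sigma>" using qp(1) by simp
    show "g (lrmin (ins p (Suc n) \<sigma>)) (ap (ins p (Suc n) \<sigma>)) (even_idx (ins p (Suc n) \<sigma>)) =
      g (lrmin \<sigma> + (if p = 0 then 1 else 0)) (ap \<sigma> + (if p = 0 \<or> p \<in> ?K then 0 else 1))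
            (even_idx \<sigma> + (if odd p then 1 else 0))"
      unfolding lrmin_ins[OF qp(3) pl] ap_ins[OF qp(3) pl] even_ins[OF qp(3) pl] mem_Collect_eq ..
  qed
  also have "\<dots> = g (lrmin \<sigma> + 1) (ap \<sigma>) (even_idx \<sigma>)
      + of_nat (ap \<sigma>) * (g (lrmin \<sigma>) (ap \<sigma>) (even_idx \<sigma>) + g (lrmin \<sigma>) (ap \<sigma>) (even_idx \<sigma> + 1))
      + of_nat (n - ap \<sigma>) * (g (lrmin \<sigma>) (ap \<sigma> + 1) (even_idx \<sigma>) + g (lrmin \<sigma>) (ap \<sigma> + 1) (even_idx \<sigma> + 1))"
  proof (rule slot_sum_Q)
    show "?K \<subseteq> {1..2*n}" using killed_range[of \<sigma>] qp(1) by fastforce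
    have "{p \<in> ?K. odd p} = {p. killed \<sigma> p \<and> odd p}" by blast
    then show "card {p \<in> ?K. odd p} = ap \<sigma>" using card_killed_odd by simp
    have "{p \<in> ?K. even p} = {p. killed \<sigma> p \<and> even p}" by blast
    then show "card {p \<in> ?K. even p} = ap \<sigma>" using card_killed_even by simp
  qed
  finally show ?thesis .
qed

lemma inner_MP:
  fixes g :: "nat \<Rightarrow> nat \<Rightarrow> nat \<Rightarrow> 'a::comm_ring_1"
  assumes x: "(\<pi>, M) \<in> marked_perms n"
  shows "(\<Sum>d\<in>Dn n. g (lrmin (fst (Phi n ((\<pi>, M), d)))) (asc (fst (Phi n ((\<pi>, M), d)))) (card (snd (Phi n ((\<pi>, M), d)))))
    = g (lrmin \<pi> + 1) (asc \<pi>) (card M)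
      + of_nat (asc \<pi>) * (g (lrmin \<pi>) (asc \<pi>) (card M) + g (lrmin \<pi>) (asc \<pi>) (card M + 1))
      + of_nat (n - asc \<pi>) * (g (lrmin \<pi>) (asc \<pi> + 1) (card M) + g (lrmin \<pi>) (asc \<pi> + 1) (card M + 1))"
proof -
  note mp = MP_props[OF x]
  let ?m = "Suc n"
  let ?F = "\<lambda>d. g (lrmin (fst (Phi n ((\<pi>, M), d)))) (asc (fst (Phi n ((\<pi>, M), d)))) (card (snd (Phi n ((\<pi>, M), d))))"
  have fin: "finite ({1..n} \<times> (UNIV :: bool set))" by simp
  have nin: "(0, False) \<notin> {1..n} \<times> (UNIV :: bool set)" by simp
  have s1: "sum ?F (Dn n) = ?F (0, False) + sum ?F ({1..n} \<times> UNIV)"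
    unfolding Dn_def by (rule sum.insert[OF fin nin])
  have F0: "?F (0, False) = g (lrmin \<pi> + 1) (asc \<pi>) (card M)"
  proof -
    have "lrmin (ins1 0 ?m \<pi>) = lrmin \<pi> + 1" using lrmin_ins1[OF mp(7), of 0] by simp
    moreover have "asc (ins1 0 ?m \<pi>) = asc \<pi>" using asc_ins1[OF mp(7), of 0] by simp
    ultimately show ?thesis by (simp add: Phi_def)
  qed
  have "sum ?F ({1..n} \<times> UNIV) = (\<Sum>(p, b)\<in>{1..n} \<times> UNIV. ?F (p, b))"
    by (rule sum.cong[OF refl]) (simp add: split_def)
  also have "\<dots> = (\<Sum>p\<in>{1..n}. \<Sum>b\<in>UNIV. ?F (p, b))"
    by (rule sum.cartesian_product[symmetric])
  also have "\<dots> = (\<Sum>p\<in>{1..n}. ?F (p, False) + ?F (p, True))"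
    by (rule sum.cong[OF refl]) (simp add: UNIV_bool)
  also have "\<dots> = (\<Sum>p\<in>{1..n}. g (lrmin \<pi>) (asc \<pi> + (if p \<in> {p. ascP \<pi> p} then 0 else 1)) (card M)
       + g (lrmin \<pi>) (asc \<pi> + (if p \<in> {p. ascP \<pi> p} then 0 else 1)) (card M + 1))"
  proof (rule sum.cong[OF refl])
    fix p assume p: "p \<in> {1..n}"
    then have pl: "p \<le> length \<pi>" and p0: "p \<noteq> 0" using mp(3) by auto
    have l: "lrmin (ins1 p ?m \<pi>) = lrmin \<pi>" using lrmin_ins1[OF mp(7) pl] p0 by simp
    have a: "asc (ins1 p ?m \<pi>) = asc \<pi> + (if p \<in> {p. ascP \<pi> p} then 0 else 1)"
      using asc_ins1[OF mp(7) pl] p0 by simp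
    have c: "card (insert ?m M) = card M + 1" using mp(5,6) by simp
    show "?F (p, False) + ?F (p, True) = g (lrmin \<pi>) (asc \<pi> + (if p \<in> {p. ascP \<pi> p} then 0 else 1)) (card M)
       + g (lrmin \<pi>) (asc \<pi> + (if p \<in> {p. ascP \<pi> p} then 0 else 1)) (card M + 1)"
      unfolding Phi_def using l a c by simp
  qed
  also have "\<dots> = of_nat (asc \<pi>) * (g (lrmin \<pi>) (asc \<pi>) (card M) + g (lrmin \<pi>) (asc \<pi>) (card M + 1))
      + of_nat (n - asc \<pi>) * (g (lrmin \<pi>) (asc \<pi> + 1) (card M) + g (lrmin \<pi>) (asc \<pi> + 1) (card M + 1))"
  proof (rule slot_sum_P)
    show "{p. ascP \<pi> p} \<subseteq> {1..n}" using ascP_range[of \<pi>] mp(3) by fastforce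
    show "card {p. ascP \<pi> p} = asc \<pi>" by (simp add: asc_ascP)
  qed
  finally have s2: "sum ?F ({1..n} \<times> UNIV) = \<dots>" .
  show ?thesis unfolding s1 F0 s2 by (simp add: add.assoc)
qed

lemma main:
  fixes g :: "nat \<Rightarrow> nat \<Rightarrow> nat \<Rightarrow> 'a::comm_ring_1"
  shows "(\<Sum>\<sigma>\<in>stirling_perms n. g (lrmin \<sigma>) (ap \<sigma>) (even_idx \<sigma>))
       = (\<Sum>x\<in>marked_perms n. g (lrmin (fst x)) (asc (fst x)) (card (snd x)))"
proof (induction n arbitrary: g)
  case 0
  have "ap [] = asc []" by (simp add: ap_def asc_def)
  moreover have "even_idx [] = 0" by (simp add: even_idx_def)
  ultimately show ?case by (simp add: Q_0 MP_0)
next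
  case (Suc n)
  define h :: "nat \<Rightarrow> nat \<Rightarrow> nat \<Rightarrow> 'a" where "h = (\<lambda>l a e. g (l + 1) a e
      + of_nat a * (g l a e + g l a (e + 1))
      + of_nat (n - a) * (g l (a + 1) e + g l (a + 1) (e + 1)))"
  let ?G = "\<lambda>\<sigma>. g (lrmin \<sigma>) (ap \<sigma>) (even_idx \<sigma>)"
  let ?H = "\<lambda>x. g (lrmin (fst x)) (asc (fst x)) (card (snd x))"
  have "sum ?G (stirling_perms (Suc n)) = (\<Sum>(\<sigma>, p)\<in>stirling_perms n \<times> {0..2*n}. ?G (ins p (Suc n) \<sigma>))"
    by (rule sum.reindex_cong[OF Q_inj Q_Suc]) auto
  also have "\<dots> = (\<Sum>\<sigma>\<in>stirling_perms n. \<Sum>p\<in>{0..2*n}. ?G (ins p (Suc n) \<sigma>))"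
    by (rule sum.cartesian_product[symmetric])
  also have "\<dots> = (\<Sum>\<sigma>\<in>stirling_perms n. h (lrmin \<sigma>) (ap \<sigma>) (even_idx \<sigma>))"
    by (rule sum.cong[OF refl]) (simp only: inner_Q h_def)
  also have "\<dots> = (\<Sum>x\<in>marked_perms n. h (lrmin (fst x)) (asc (fst x)) (card (snd x)))"
    by (rule Suc.IH)
  also have "\<dots> = (\<Sum>x\<in>marked_perms n. \<Sum>d\<in>Dn n. ?H (Phi n (x, d)))"
  proof (rule sum.cong[OF refl])
    fix x assume x: "x \<in> marked_perms n"
    obtain \<pi> M where xe: "x = (\<pi>, M)" by fastforce
    show "h (lrmin (fst x)) (asc (fst x)) (card (snd x)) = (\<Sum>d\<in>Dn n. ?H (Phi n (x, d)))"
      unfolding xe using inner_MP[of \<pi> M n g] x xe by (simp add: h_def)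
  qed
  also have "\<dots> = (\<Sum>y\<in>marked_perms n \<times> Dn n. ?H (Phi n y))"
    by (subst sum.cartesian_product) (simp add: case_prod_beta')
  also have "\<dots> = sum ?H (marked_perms (Suc n))"
    by (rule sum.reindex_cong[OF MP_inj MP_Suc, symmetric]) simp
  finally show ?case .
qed


theorem theorem1:
  fixes n :: nat and q x y :: "'a :: comm_ring_1"
  assumes "n \<ge> 1"
  shows "(\<Sum>\<sigma>\<in>stirling_perms n. q ^ lrmin \<sigma> * x ^ ap \<sigma> * y ^ even_idx \<sigma>) =
         (\<Sum>p\<in>marked_perms n. q ^ lrmin (fst p) * x ^ asc (fst p) * y ^ mark p)"
  using main[of "\<lambda>l a e. q ^ l * x ^ a * y ^ e" n] by (simp add: mark_def)

end
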